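(* Let $\sigma>0$, $n\ge 1$, and let $\{z_k\}_{k=1}^n$ and $\{h_k\}_{k=1}^n$ be the points and weights of the $n$-point Gauss--Hermite quadrature with respect to the standard normal density, i.e. $z_k$ are the roots of the probabilists' Hermite polynomial $He_n$ and the $h_k$ are such that $\sum_{k=1}^n h_k q(z_k)=\int_{-\infty}^\infty q(z)n(z)\,dz$ for every polynomial $q$ of degree at most $2n-1$. Set $x_k=\phi_\sigma^{-1}(z_k)$ and $G_m(x)=He_m(\phi_\sigma(x))$ for $m\ge 0$, and let $w(x)=f_{\mathrm{IG}}(x\,|\,\sigma,\sigma)\,\frac{1+x}{2}$ on $(0,\infty)$. Then the points $\{x_k\}$ with weights $\{h_k\}$ form a numerical quadrature with respect to $w$ on $(0,\infty)$ whose associated orthogonal functions are the $G_m$: namely, $\int_0^\infty G_m(x)G_{m'}(x)w(x)\,dx = m!\,\delta_{mm'}$ for all $m,m'\ge0$; the $x_k$ are the roots of $G_n$; $h_k=\frac{\phi_\sigma'(x_k)}{G_n'(x_k)}\int_0^\infty \frac{G_n(x)}{\phi_\sigma(x)-\phi_\sigma(x_k)}w(x)\,dx$; and $\int_0^\infty g(x)w(x)\,dx=\sum_{k=1}^n h_k\,g(x_k)$ for every function $g$ on $(0,\infty)$ such that $g\circ\phi_\sigma^{-1}$ is a polynomial of degree at most $2n-1$.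
   Context: $n(z)=e^{-z^2/2}/\sqrt{2\pi}$ is the standard normal density and $He_m$ are the probabilists' Hermite polynomials (orthogonal w.r.t. $n(z)$, with $\int He_m He_{m'} n\,dz=m!\,\delta_{mm'}$). The inverse Gaussian density is $f_{\mathrm{IG}}(x\,|\,\gamma,\delta)=\frac{\delta}{\sqrt{2\pi x^3}}\exp\left(-\frac{(\gamma x-\delta)^2}{2x}\right)$ for $x>0$. The map $\phi_\sigma(x)=\sigma\left(\sqrt{x}-\frac{1}{\sqrt{x}}\right)$ is an increasing bijection $(0,\infty)\to\mathbb{R}$ with inverse $\phi_\sigma^{-1}(z)=1+\frac{z^2}{2\sigma^2}+\frac{z}{\sigma}\sqrt{1+\frac{z^2}{4\sigma^2}}$. *)

theory Defs
  imports "HOL-Analysis.Analysis" "HOL-Computational_Algebra.Polynomial"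
begin

fun He :: "nat \<Rightarrow> real poly" where
  "He 0 = 1"
| "He (Suc 0) = [:0, 1:]"
| "He (Suc (Suc k)) = [:0, 1:] * He (Suc k) - smult (real (Suc k)) (He k)"

definition ndens :: "real \<Rightarrow> real" where
  "ndens z = exp (- (z^2) / 2) / sqrt (2 * pi)"

definition f_IG :: "real \<Rightarrow> real \<Rightarrow> real \<Rightarrow> real" where
  "f_IG x \<gamma> \<delta> = \<delta> / sqrt (2 * pi * x^3) * exp (- ((\<gamma> * x - \<delta>)^2) / (2 * x))"

definition phi :: "real \<Rightarrow> real \<Rightarrow> real" where
  "phi \<sigma> x = \<sigma> * (sqrt x - 1 / sqrt x)"

definition phi_inv :: "real \<Rightarrow> real \<Rightarrow> real" where
  "phi_inv \<sigma> z = 1 + z^2 / (2 * \<sigma>^2) + z / \<sigma> * sqrt (1 + z^2 / (4 * \<sigma>^2))"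

definition G :: "real \<Rightarrow> nat \<Rightarrow> real \<Rightarrow> real" where
  "G \<sigma> m x = poly (He m) (phi \<sigma> x)"

definition wt :: "real \<Rightarrow> real \<Rightarrow> real" where
  "wt \<sigma> x = f_IG x \<sigma> \<sigma> * (1 + x) / 2"

end

theory Submission
  imports Defs "HOL-Probability.Distributions"
begin

lemma He_deg: "degree (He m) = m \<and> coeff (He m) m = 1"
proof (induction m rule: He.induct)
  case 1 then show ?case by simp
next
  case 2 then show ?case by simp
next
  case (3 k)
  have nz: "He (Suc k) \<noteq> 0"
  proof
    assume "He (Suc k) = 0"
    then have "degree (He (Suc k)) = 0" by simp
    with 3 show False by simp
  qed
  have d: "degree ([:0, 1:] * He (Suc k)) = Suc (Suc k)"
    using 3 nz by (simp add: degree_mult_eq)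
  have c: "coeff ([:0, 1:] * He (Suc k)) (Suc (Suc k)) = 1"
    using 3 by (simp add: coeff_pCons)
  have e: "degree (smult (real (Suc k)) (He k)) < Suc (Suc k)"
    using 3 by simp
  have "degree (He (Suc (Suc k))) = Suc (Suc k)"
    using d e nz by (metis He.simps(3) diff_conv_add_uminus degree_add_eq_left degree_minus)
  moreover have "coeff (He (Suc (Suc k))) (Suc (Suc k)) = 1"
    using c e 3 by (simp add: coeff_eq_0)
  ultimately show ?case by simp
qed

lemma He_pderiv: "pderiv (He (Suc m)) = smult (real (Suc m)) (He m)"
proof (induction m rule: less_induct)
  case (less m)
  show ?case
  proof (cases m)
    case 0 then show ?thesis by (simp add: pderiv_pCons)
  next
    case (Suc k)
    show ?thesis
    proof (cases k)
      case 0 then show ?thesis using Suc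
        by (simp add: pderiv_pCons pderiv_mult pderiv_diff numeral_2_eq_2 algebra_simps)
    next
      case (Suc j)
      have ih1: "pderiv (He (Suc k)) = smult (real (Suc k)) (He k)" using less \<open>m = Suc k\<close> by simp
      have ih2: "pderiv (He k) = smult (real k) (He j)" using less \<open>m = Suc k\<close> Suc by simp
      have "pderiv (He (Suc m)) = He (Suc k) + [:0,1:] * smult (real (Suc k)) (He k)
               - smult (real (Suc k)) (smult (real k) (He j))"
        using \<open>m = Suc k\<close> ih1 ih2 by (simp add: pderiv_mult pderiv_diff pderiv_smult pderiv_pCons)
      also have "... = He (Suc k) + smult (real (Suc k)) ([:0,1:] * He k - smult (real k) (He j))"
        by (simp add: smult_diff_right smult_add_left del: He.simps)
      also have "... = He (Suc k) + smult (real (Suc k)) (He (Suc k))"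
        using Suc by simp
      also have "... = smult (1 + real (Suc k)) (He (Suc k))"
        by (subst smult_add_left) simp
      finally show ?thesis using \<open>m = Suc k\<close> by (simp del: He.simps)
    qed
  qed
qed

lemma He_rec: "He (Suc m) = [:0,1:] * He m - pderiv (He m)"
proof (cases m)
  case 0 then show ?thesis by simp
next
  case (Suc k) then show ?thesis by (simp add: He_pderiv)
qed


definition Mom :: "nat \<Rightarrow> real" where
  "Mom k = integral\<^sup>L lborel (\<lambda>x. std_normal_density x * x ^ k)"

lemma Mom_even: "Mom (2 * k) = fact (2 * k) / (2 ^ k * fact k)"
  unfolding Mom_def by (rule integral_std_normal_moment_even)

lemma Mom_odd: "Mom (2 * k + 1) = 0"
  unfolding Mom_def by (rule integral_std_normal_moment_odd)

lemma Mom_rec: "Mom (Suc (Suc i)) = real (Suc i) * Mom i"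
proof (cases "even i")
  case True
  then obtain k where k: "i = 2 * k" by (auto elim: evenE)
  have "Mom (Suc (Suc i)) = Mom (2 * Suc k)" using k by simp
  also have "... = fact (2 * Suc k) / (2 ^ Suc k * fact (Suc k))" by (rule Mom_even)
  also have "... = real (Suc i) * (fact (2 * k) / (2 ^ k * fact k))"
  proof -
    have f0: "(fact (Suc (Suc (2 * k))) :: real) = (2 * real k + 2) * ((2 * real k + 1) * fact (2 * k))"
      by (simp only: fact_Suc) (simp add: algebra_simps)
    have "2 * Suc k = Suc (Suc (2 * k))" by simp
    then have f1: "(fact (2 * Suc k) :: real) = (2 * real k + 2) * ((2 * real k + 1) * fact (2 * k))"
      using f0 by metis
    have f2: "(fact (Suc k) :: real) = (real k + 1) * fact k" by simp
    have p1: "real k + 1 \<noteq> 0" "(fact k :: real) \<noteq> 0" "(2::real) ^ k \<noteq> 0" by auto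
    have "(2 * real k + 2) * ((2 * real k + 1) * fact (2 * k)) / (2 ^ Suc k * ((real k + 1) * fact k))
        = (2 * real k + 1) * (fact (2 * k) / (2 ^ k * fact k))"
    proof -
      have gen: "\<And>a c F d e :: real. a \<noteq> 0 \<Longrightarrow> d \<noteq> 0 \<Longrightarrow> e \<noteq> 0 \<Longrightarrow>
          (2*a)*(c*F) / ((2*d)*(a*e)) = c*(F/(d*e))" by (simp add: field_simps)
      have e1: "(2 * real k + 2) = 2 * (real k + 1)" by simp
      have e2: "(2::real) ^ Suc k = 2 * 2 ^ k" by simp
      have g: "(2*(real k+1))*((2*real k+1)*fact(2*k)) / ((2*2^k)*((real k+1)*fact k))
          = (2*real k+1)*(fact(2*k)/(2^k*fact k))" by (rule gen) (use p1 in auto)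
      show ?thesis by (simp only: e1 e2 g)
    qed
    then show ?thesis unfolding f1 f2 using k by simp
  qed
  finally show ?thesis using k Mom_even by simp
next
  case False
  then obtain k where k: "i = 2 * k + 1" by (auto elim: oddE)
  have "Mom (Suc (Suc i)) = Mom (2 * Suc k + 1)" using k by simp
  then have a: "Mom (Suc (Suc i)) = 0" by (metis Mom_odd)
  have b: "Mom i = 0" using k by (metis Mom_odd)
  show ?thesis using a b by simp
qed

lemma Mom_0: "Mom 0 = 1" using Mom_even[of 0] by simp
lemma Mom_1: "Mom (Suc 0) = 0" using Mom_odd[of 0] by simp

definition Lf :: "real poly \<Rightarrow> real" where
  "Lf p = integral\<^sup>L lborel (\<lambda>x. std_normal_density x * poly p x)"

lemma integrable_poly_normal: "integrable lborel (\<lambda>x. std_normal_density x * poly p x)"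
proof -
  have "(\<lambda>x. std_normal_density x * poly p x) = (\<lambda>x. \<Sum>i\<le>degree p. coeff p i * (std_normal_density x * x ^ i))"
    by (simp add: poly_altdef sum_distrib_left algebra_simps)
  moreover have "integrable lborel (\<lambda>x. \<Sum>i\<le>degree p. coeff p i * (std_normal_density x * x ^ i))"
    by (auto intro!: integrable_sum integrable_mult_right integrable_std_normal_moment)
  ultimately show ?thesis by simp
qed

lemma poly_altdef_gen: fixes p :: "real poly" shows "degree p < N \<Longrightarrow> poly p x = (\<Sum>i<N. coeff p i * x ^ i)"
proof -
  assume N: "degree p < N"
  have "(\<Sum>i<N. coeff p i * x ^ i) = (\<Sum>i\<le>degree p. coeff p i * x ^ i)"
    using N by (intro sum.mono_neutral_right) (auto simp: coeff_eq_0)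
  then show ?thesis using poly_altdef[of p x] by simp
qed

lemma Lf_sum_gen: "degree p < N \<Longrightarrow> Lf p = (\<Sum>i<N. coeff p i * Mom i)"
proof -
  assume N: "degree p < N"
  have "(\<lambda>x. std_normal_density x * poly p x) = (\<lambda>x. \<Sum>i<N. coeff p i * (std_normal_density x * x ^ i))"
    using N by (simp add: poly_altdef_gen[OF N] sum_distrib_left algebra_simps)
  then have "Lf p = integral\<^sup>L lborel (\<lambda>x. \<Sum>i<N. coeff p i * (std_normal_density x * x ^ i))"
    unfolding Lf_def by simp
  also have "... = (\<Sum>i<N. coeff p i * Mom i)"
    by (simp add: Mom_def integrable_std_normal_moment)
  finally show ?thesis .
qed


lemma Lf_add: "Lf (p + q) = Lf p + Lf q"
  unfolding Lf_def using integrable_poly_normal[of p] integrable_poly_normal[of q]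
  by (simp add: distrib_left)

lemma Lf_diff: "Lf (p - q) = Lf p - Lf q"
  unfolding Lf_def using integrable_poly_normal[of p] integrable_poly_normal[of q]
  by (simp add: right_diff_distrib)

lemma Lf_smult: "Lf (smult c p) = c * Lf p"
  unfolding Lf_def by (simp add: algebra_simps)

lemma Lf_const: "Lf [:c:] = c"
  using Lf_sum_gen[of "[:c:]" 1] by (simp add: Mom_0)

lemma Lf_shift: "Lf (pCons 0 p) = Lf (pderiv p)"
proof -
  define D where "D = degree p"
  have "Lf (pCons 0 p) = (\<Sum>i<Suc (Suc D). coeff (pCons 0 p) i * Mom i)"
    by (rule Lf_sum_gen) (use degree_pCons_le[of 0 p] in \<open>simp add: D_def\<close>)
  also have "... = (\<Sum>i<Suc D. coeff p i * Mom (Suc i))"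
    by (subst sum.lessThan_Suc_shift) simp
  also have "... = (\<Sum>i<D. coeff p (Suc i) * Mom (Suc (Suc i)))"
    by (subst sum.lessThan_Suc_shift) (simp add: Mom_1)
  also have "... = (\<Sum>i<D. real (Suc i) * coeff p (Suc i) * Mom i)"
    by (simp add: Mom_rec algebra_simps)
  also have "... = (\<Sum>i<Suc D. real (Suc i) * coeff p (Suc i) * Mom i)"
    by (simp add: D_def coeff_eq_0)
  also have "... = (\<Sum>i<Suc D. coeff (pderiv p) i * Mom i)"
    by (simp add: coeff_pderiv)
  also have "... = Lf (pderiv p)"
    by (rule Lf_sum_gen[symmetric]) (simp add: D_def degree_pderiv)
  finally show ?thesis .
qed

lemma Lf_He_step: "Lf (He (Suc m) * p) = Lf (He m * pderiv p)"
proof -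
  have "He (Suc m) * p = pCons 0 (He m * p) - pderiv (He m) * p"
    by (simp add: He_rec[of m] algebra_simps del: He.simps)
  then have "Lf (He (Suc m) * p) = Lf (pderiv (He m * p)) - Lf (pderiv (He m) * p)"
    by (simp add: Lf_diff Lf_shift del: He.simps)
  also have "... = Lf (He m * pderiv p)"
    by (simp add: pderiv_mult Lf_add algebra_simps del: He.simps)
  finally show ?thesis .
qed

lemma Lf_He_higher: "Lf (He m * p) = Lf ((pderiv ^^ m) p)"
proof (induction m arbitrary: p)
  case 0 then show ?case by simp
next
  case (Suc m)
  have "Lf (He (Suc m) * p) = Lf (He m * pderiv p)" by (rule Lf_He_step)
  also have "... = Lf ((pderiv ^^ m) (pderiv p))" by (rule Suc.IH)
  also have "... = Lf ((pderiv ^^ Suc m) p)" by (simp only: funpow_Suc_right o_apply)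
  finally show ?case .
qed

lemma higher_pderiv_low: fixes q :: "real poly" assumes "degree q \<le> m"
  shows "(pderiv ^^ m) q = [:fact m * coeff q m:]"
proof -
  have "degree ((pderiv ^^ m) q) = 0" using assms by (simp add: degree_higher_pderiv)
  then have "(pderiv ^^ m) q = [:coeff ((pderiv ^^ m) q) 0:]"
    by (metis degree_0_id)
  also have "coeff ((pderiv ^^ m) q) 0 = fact m * coeff q m"
    by (simp add: coeff_higher_pderiv pochhammer_fact)
  finally show ?thesis .
qed

lemma He_orth_le: "m' \<le> m \<Longrightarrow> Lf (He m * He m') = (if m = m' then fact m else 0)"
proof -
  assume le: "m' \<le> m"
  have "Lf (He m * He m') = fact m * coeff (He m') m"
    using le He_deg[of m'] by (simp add: Lf_He_higher higher_pderiv_low Lf_const del: He.simps)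
  also have "... = (if m = m' then fact m else 0)"
    using He_deg[of m'] le by (auto simp: coeff_eq_0 simp del: He.simps)
  finally show ?thesis .
qed

lemma He_orth: "Lf (He m * He m') = (if m = m' then fact m else 0)"
proof (cases "m' \<le> m")
  case True then show ?thesis by (rule He_orth_le)
next
  case False
  then have "Lf (He m' * He m) = (if m' = m then fact m' else 0)" by (intro He_orth_le) simp
  then show ?thesis using False by (simp add: mult.commute del: He.simps)
qed


lemma phi_inv_sq: assumes "\<sigma> > 0"
  shows "phi_inv \<sigma> z = (z/(2*\<sigma>) + sqrt (1 + (z/(2*\<sigma>))^2))^2"
proof -
  define u where "u = z/(2*\<sigma>)"
  define r where "r = sqrt (1 + u^2)"
  have r2: "r^2 = 1 + u^2" unfolding r_def by simp
  have a: "z^2 / (2*\<sigma>^2) = 2*u^2" unfolding u_def using assms by (simp add: field_simps power2_eq_square)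
  have b: "z / \<sigma> * sqrt (1 + z^2/(4*\<sigma>^2)) = 2*u*r"
  proof -
    have "z^2/(4*\<sigma>^2) = u^2" unfolding u_def using assms by (simp add: field_simps power2_eq_square)
    then show ?thesis unfolding r_def u_def using assms by simp
  qed
  have "phi_inv \<sigma> z = 1 + 2*u^2 + 2*u*r" unfolding phi_inv_def using a b by simp
  also have "... = (u + r)^2" using r2 by (simp add: power2_eq_square algebra_simps)
  finally show ?thesis unfolding r_def u_def .
qed

lemma sqrt_gt_abs: "\<bar>u::real\<bar> < sqrt (1 + u^2)"
  by (rule real_less_rsqrt) simp

lemma phi_inv_pos: assumes "\<sigma> > 0" shows "phi_inv \<sigma> z > 0"
proof -
  have "z/(2*\<sigma>) + sqrt (1 + (z/(2*\<sigma>))^2) > 0" using sqrt_gt_abs[of "z/(2*\<sigma>)"] by linarith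
  then show ?thesis using phi_inv_sq[OF assms] by simp
qed

lemma phi_phi_inv: assumes "\<sigma> > 0" shows "phi \<sigma> (phi_inv \<sigma> z) = z"
proof -
  define u where "u = z/(2*\<sigma>)"
  define r where "r = sqrt (1 + u^2)"
  have pos: "u + r > 0" using sqrt_gt_abs[of u] unfolding r_def by linarith
  have r2: "r^2 = 1 + u^2" unfolding r_def by simp
  have s: "sqrt (phi_inv \<sigma> z) = u + r" using phi_inv_sq[OF assms, of z] pos unfolding u_def r_def by simp
  have inv: "1 / (u + r) = r - u"
    using pos r2 by (simp add: field_simps power2_eq_square algebra_simps)
  have "phi \<sigma> (phi_inv \<sigma> z) = \<sigma> * ((u + r) - (r - u))" unfolding phi_def s inv by simp
  also have "... = z" unfolding u_def using assms by simp
  finally show ?thesis .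
qed

lemma phi_inv_phi: assumes "\<sigma> > 0" "x > 0" shows "phi_inv \<sigma> (phi \<sigma> x) = x"
proof -
  define s where "s = sqrt x"
  have s0: "s > 0" unfolding s_def using assms by simp
  have u: "phi \<sigma> x / (2*\<sigma>) = (s - 1/s)/2" unfolding phi_def s_def using assms by simp
  have r: "sqrt (1 + ((s - 1/s)/2)^2) = (s + 1/s)/2"
  proof -
    have "1 + ((s - 1/s)/2)^2 = ((s + 1/s)/2)^2" using s0 by (simp add: field_simps power2_eq_square)
    moreover have "(s + 1/s)/2 \<ge> 0" using s0 by simp
    ultimately show ?thesis by simp
  qed
  have "phi_inv \<sigma> (phi \<sigma> x) = ((s - 1/s)/2 + (s + 1/s)/2)^2" unfolding phi_inv_sq[OF assms(1)] u r ..
  also have "... = s^2" by (simp add: field_simps)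
  also have "... = x" unfolding s_def using assms by simp
  finally show ?thesis .
qed


definition dphi :: "real \<Rightarrow> real \<Rightarrow> real" where
  "dphi \<sigma> x = \<sigma> * (1 + x) / (2 * x * sqrt x)"

lemma phi_deriv: assumes "x > 0" shows "(phi \<sigma> has_real_derivative dphi \<sigma> x) (at x)"
proof -
  have "((\<lambda>x. \<sigma> * (sqrt x - 1 / sqrt x)) has_real_derivative
        \<sigma> * (inverse (sqrt x) / 2 - (- (inverse (sqrt x) / 2) / (sqrt x * sqrt x)))) (at x)"
    using assms by (auto intro!: derivative_eq_intros)
  moreover have "\<sigma> * (inverse (sqrt x) / 2 - (- (inverse (sqrt x) / 2) / (sqrt x * sqrt x))) = dphi \<sigma> x"
    unfolding dphi_def using assms by (simp add: field_simps)
  ultimately show ?thesis unfolding phi_def[abs_def] by simp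
qed

lemma dphi_pos: "\<sigma> > 0 \<Longrightarrow> x > 0 \<Longrightarrow> dphi \<sigma> x > 0"
  unfolding dphi_def by simp

lemma ndens_eq: "ndens t = std_normal_density t"
  unfolding ndens_def std_normal_density_def by simp

lemma wt_eq: assumes "\<sigma> > 0" "x > 0" shows "wt \<sigma> x = dphi \<sigma> x * ndens (phi \<sigma> x)"
proof -
  define s where "s = sqrt x"
  have s0: "s > 0" unfolding s_def using assms by simp
  have x: "x = s^2" unfolding s_def using assms by simp
  have e1: "sqrt (2 * pi * x^3) = sqrt (2*pi) * (x * s)"
  proof -
    have "(sqrt (2 * pi) * (x * s))^2 = 2 * pi * (x * s)^2" by (simp add: power_mult_distrib)
    also have "... = 2 * pi * x^3" using x by (simp add: power2_eq_square power3_eq_cube)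
    finally have "2 * pi * x^3 = (sqrt (2*pi) * (x * s))^2" by simp
    then show ?thesis using s0 assms by simp
  qed
  have e2: "- ((\<sigma> * x - \<sigma>)^2) / (2 * x) = - ((phi \<sigma> x)^2) / 2"
    unfolding phi_def s_def[symmetric] using s0 x by (simp add: field_simps power2_eq_square)
  show ?thesis unfolding wt_def f_IG_def ndens_def dphi_def e1 e2 s_def[symmetric]
    using s0 assms by (simp add: field_simps)
qed

lemma poly_normal_abs_int: "(\<lambda>t. poly q t * ndens t) absolutely_integrable_on UNIV"
  and poly_normal_integral: "integral UNIV (\<lambda>t. poly q t * ndens t) = Lf q"
proof -
  have i: "integrable lborel (\<lambda>t. poly q t * ndens t)"
    using integrable_poly_normal[of q] by (simp add: ndens_eq mult.commute)
  have i2: "integrable lborel (\<lambda>t. norm (poly q t * ndens t))" using i by (rule integrable_norm)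
  show "(\<lambda>t. poly q t * ndens t) absolutely_integrable_on UNIV"
    unfolding absolutely_integrable_on_def using integrable_on_lborel[OF i] integrable_on_lborel[OF i2] by simp
  show "integral UNIV (\<lambda>t. poly q t * ndens t) = Lf q"
    using integral_lborel[OF i] unfolding Lf_def by (simp add: ndens_eq mult.commute)
qed

lemma phi_image: assumes "\<sigma> > 0" shows "phi \<sigma> ` {0<..} = UNIV"
proof -
  have "z \<in> phi \<sigma> ` {0<..}" for z
    using phi_phi_inv[OF assms, of z] phi_inv_pos[OF assms, of z] by (metis greaterThan_iff image_eqI)
  then show ?thesis by auto
qed

lemma phi_inj: assumes "\<sigma> > 0" shows "inj_on (phi \<sigma>) {0<..}"
  by (rule inj_on_inverseI[where g = "phi_inv \<sigma>"]) (use phi_inv_phi[OF assms] in auto)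

lemma transfer: assumes "\<sigma> > 0"
  shows "((\<lambda>x. poly q (phi \<sigma> x) * wt \<sigma> x) has_integral Lf q) {0<..}"
proof -
  let ?f = "\<lambda>t. poly q t * ndens t"
  have "(\<lambda>x. \<bar>dphi \<sigma> x\<bar> * ?f (phi \<sigma> x)) absolutely_integrable_on {0<..} \<and>
           integral {0<..} (\<lambda>x. \<bar>dphi \<sigma> x\<bar> * ?f (phi \<sigma> x)) = Lf q"
    using has_absolute_integral_change_of_variables_1'[of "{0<..}" "phi \<sigma>" "dphi \<sigma>" ?f "Lf q"]
      phi_deriv phi_inj[OF assms] phi_image[OF assms] poly_normal_abs_int poly_normal_integral
    by (auto intro: has_field_derivative_at_within)
  then have "((\<lambda>x. \<bar>dphi \<sigma> x\<bar> * ?f (phi \<sigma> x)) has_integral Lf q) {0<..}"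
    using set_lebesgue_integral_eq_integral(1) integrable_integral by metis
  moreover have "\<bar>dphi \<sigma> x\<bar> * ?f (phi \<sigma> x) = poly q (phi \<sigma> x) * wt \<sigma> x" if "x \<in> {0<..}" for x
  proof -
    have "\<bar>dphi \<sigma> x\<bar> = dphi \<sigma> x" using dphi_pos[OF assms, of x] that by simp
    then show ?thesis using wt_eq[OF assms, of x] that by simp
  qed
  ultimately show ?thesis using has_integral_cong by (metis (no_types, lifting))
qed


lemma Lf_sq_pos: assumes "p \<noteq> 0" shows "Lf (p * p) > 0"
proof -
  let ?f = "\<lambda>x. std_normal_density x * poly (p * p) x"
  have nn: "AE x in lborel. 0 \<le> ?f x" by (simp add: normal_density_nonneg)
  have ge: "Lf (p * p) \<ge> 0" unfolding Lf_def by (rule integral_nonneg_AE[OF nn])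
  have "Lf (p * p) \<noteq> 0"
  proof
    assume "Lf (p * p) = 0"
    then have "AE x in lborel. ?f x = 0"
      using integral_nonneg_eq_0_iff_AE[OF integrable_poly_normal nn] unfolding Lf_def by simp
    then have AE1: "AE x in lborel. poly p x = 0"
    proof eventually_elim
      case (elim x)
      have "std_normal_density x > 0" by (rule normal_density_pos) simp
      then show ?case using elim by simp
    qed
    have fin: "finite {x. poly p x = 0}" using assms by (rule poly_roots_finite)
    have AE2: "AE x in lborel. \<forall>s\<in>{x. poly p x = 0}. x \<noteq> s"
      by (rule AE_finite_allI[OF fin]) (rule AE_lborel_singleton)
    have c: "AE x in lborel. poly p x = 0 \<and> (\<forall>s\<in>{x. poly p x = 0}. x \<noteq> s)"
      using AE1 AE2 by (rule eventually_conj)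
    have "AE x::real in lborel. False" by (rule eventually_mono[OF c]) auto
    then have "ae_filter (lborel :: real measure) = bot" using trivial_limit_def by blast
    then have "emeasure (lborel :: real measure) (space lborel) = 0" by (simp add: ae_filter_eq_bot_iff)
    then show False by simp
  qed
  with ge show ?thesis by simp
qed


theorem lemma2:
  fixes \<sigma> :: real and n :: nat and z h :: "nat \<Rightarrow> real"
  assumes "\<sigma> > 0" and "n \<ge> 1"
    and roots: "z ` {1..n} = {t. poly (He n) t = 0}"
    and weights: "\<And>q :: real poly. degree q \<le> 2 * n - 1 \<Longrightarrow>
        (\<Sum>k = 1..n. h k * poly q (z k)) = integral UNIV (\<lambda>t. poly q t * ndens t)"
  shows "(\<forall>m m'. ((\<lambda>x. G \<sigma> m x * G \<sigma> m' x * wt \<sigma> x) has_integral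
                       (if m = m' then fact m else 0)) {0<..})
    \<and> {x \<in> {0<..}. G \<sigma> n x = 0} = (\<lambda>k. phi_inv \<sigma> (z k)) ` {1..n}
    \<and> (\<forall>k \<in> {1..n}. \<exists>I. ((\<lambda>x. G \<sigma> n x / (phi \<sigma> x - phi \<sigma> (phi_inv \<sigma> (z k))) * wt \<sigma> x)
                              has_integral I) {0<..}
           \<and> h k = deriv (phi \<sigma>) (phi_inv \<sigma> (z k)) / deriv (G \<sigma> n) (phi_inv \<sigma> (z k)) * I)
    \<and> (\<forall>g :: real \<Rightarrow> real. (\<exists>q :: real poly. degree q \<le> 2 * n - 1
              \<and> (\<forall>t. g (phi_inv \<sigma> t) = poly q t))
         \<longrightarrow> ((\<lambda>x. g x * wt \<sigma> x) has_integral (\<Sum>k = 1..n. h k * g (phi_inv \<sigma> (z k)))) {0<..})"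
proof (intro conjI)
  note s = \<open>\<sigma> > 0\<close>
  have Q: "(\<Sum>k = 1..n. h k * poly q (z k)) = Lf q" if "degree q \<le> 2 * n - 1" for q
    using weights[OF that] poly_normal_integral by simp
  have zroot: "poly (He n) (z k) = 0" if "k \<in> {1..n}" for k
    using roots that by blast
  have Hn0: "He n \<noteq> 0"
  proof
    assume "He n = 0" then have "degree (He n) = 0" by simp
    with He_deg[of n] \<open>n \<ge> 1\<close> show False by simp
  qed
  have inj: "inj_on z {1..n}"
  proof (rule ccontr)
    assume ni: "\<not> inj_on z {1..n}"
    define S where "S = z ` {1..n}"
    have fS: "finite S" unfolding S_def by simp
    have cS: "card S < n"
    proof -
      have "card S \<le> card {1..n}" unfolding S_def by (rule card_image_le) simp
      moreover have "card S \<noteq> card {1..n}" using ni inj_on_iff_eq_card[of "{1..n}" z] unfolding S_def by simp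
      ultimately show ?thesis by simp
    qed
    define P where "P = (\<Prod>s\<in>S. [:-s, 1:])"
    have P0: "P \<noteq> 0" unfolding P_def using fS by (simp add: prod_zero_iff)
    have dP: "degree P \<le> card S"
      unfolding P_def using degree_prod_sum_le[OF fS, of "\<lambda>s. [:-s, 1:]"] by simp
    have dPP: "degree (P * P) \<le> 2 * n - 1"
      using degree_mult_le[of P P] dP cS by simp
    have "poly (P * P) (z k) = 0" if "k \<in> {1..n}" for k
    proof -
      have "z k \<in> S" using that unfolding S_def by simp
      then have "poly P (z k) = 0" unfolding P_def poly_prod using fS
        by (simp add: prod_zero_iff) 
      then show ?thesis by simp
    qed
    then have "Lf (P * P) = 0" using Q[OF dPP] by simp
    with Lf_sq_pos[OF P0] show False by simp
  qed
  show "\<forall>m m'. ((\<lambda>x. G \<sigma> m x * G \<sigma> m' x * wt \<sigma> x) has_integral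
                       (if m = m' then fact m else 0)) {0<..}"
  proof (intro allI)
    fix m m'
    have "((\<lambda>x. poly (He m * He m') (phi \<sigma> x) * wt \<sigma> x) has_integral Lf (He m * He m')) {0<..}"
      by (rule transfer[OF s])
    then show "((\<lambda>x. G \<sigma> m x * G \<sigma> m' x * wt \<sigma> x) has_integral
                       (if m = m' then fact m else 0)) {0<..}"
      unfolding He_orth G_def by (simp del: He.simps)
  qed
  show "{x \<in> {0<..}. G \<sigma> n x = 0} = (\<lambda>k. phi_inv \<sigma> (z k)) ` {1..n}"
  proof
    show "{x \<in> {0<..}. G \<sigma> n x = 0} \<subseteq> (\<lambda>k. phi_inv \<sigma> (z k)) ` {1..n}"
    proof
      fix x assume "x \<in> {x \<in> {0<..}. G \<sigma> n x = 0}"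
      then have x: "x > 0" "poly (He n) (phi \<sigma> x) = 0" unfolding G_def by auto
      then have "phi \<sigma> x \<in> z ` {1..n}" using roots by simp
      then obtain k where k: "k \<in> {1..n}" "phi \<sigma> x = z k" by auto
      then have "x = phi_inv \<sigma> (z k)" using phi_inv_phi[OF s x(1)] by simp
      with k show "x \<in> (\<lambda>k. phi_inv \<sigma> (z k)) ` {1..n}" by auto
    qed
    show "(\<lambda>k. phi_inv \<sigma> (z k)) ` {1..n} \<subseteq> {x \<in> {0<..}. G \<sigma> n x = 0}"
      using phi_inv_pos[OF s] phi_phi_inv[OF s] zroot unfolding G_def by auto
  qed
  show "\<forall>k \<in> {1..n}. \<exists>I. ((\<lambda>x. G \<sigma> n x / (phi \<sigma> x - phi \<sigma> (phi_inv \<sigma> (z k))) * wt \<sigma> x)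
                              has_integral I) {0<..}
           \<and> h k = deriv (phi \<sigma>) (phi_inv \<sigma> (z k)) / deriv (G \<sigma> n) (phi_inv \<sigma> (z k)) * I"
  proof
    fix k assume k: "k \<in> {1..n}"
    define zk where "zk = z k"
    define xk where "xk = phi_inv \<sigma> zk"
    have xk0: "xk > 0" unfolding xk_def using phi_inv_pos[OF s] .
    have pxk: "phi \<sigma> xk = zk" unfolding xk_def using phi_phi_inv[OF s] .
    have "[:-zk, 1:] dvd He n" using zroot[OF k] unfolding zk_def by (simp add: poly_eq_0_iff_dvd)
    then obtain R where R: "He n = [:-zk, 1:] * R" by (elim dvdE)
    have R0: "R \<noteq> 0" using Hn0 R by auto
    have e: "degree ([:-zk, 1:] * R) = 1 + degree R" using R0 by (subst degree_mult_eq) auto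
    have "n = 1 + degree R" using He_deg[of n] R e by metis
    then have dR: "degree R = n - 1" by simp
    have dR2: "degree R \<le> 2 * n - 1" using dR by simp
    have dRR: "degree (R * R) \<le> 2 * n - 1" using dR degree_mult_le[of R R] by simp
    have Rj: "poly R (z j) = 0" if "j \<in> {1..n}" "j \<noteq> k" for j
    proof -
      have "z j \<noteq> zk" using inj that k unfolding zk_def inj_on_def by blast
      moreover have "poly (He n) (z j) = 0" using zroot[OF that(1)] .
      ultimately show ?thesis using R by simp
    qed
    have sumR: "(\<Sum>j = 1..n. h j * f (poly R (z j))) = h k * f (poly R zk)" if "f 0 = 0" for f :: "real \<Rightarrow> real"
    proof -
      have "(\<Sum>j = 1..n. h j * f (poly R (z j))) = h k * f (poly R (z k)) + (\<Sum>j \<in> {1..n} - {k}. h j * f (poly R (z j)))"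
        using k by (simp add: sum.remove)
      also have "(\<Sum>j \<in> {1..n} - {k}. h j * f (poly R (z j))) = 0"
        using Rj that by (intro sum.neutral) auto
      finally show ?thesis unfolding zk_def by simp
    qed
    have LR: "Lf R = h k * poly R zk" using Q[OF dR2] sumR[of "\<lambda>y. y"] by simp
    have Rk: "poly R zk \<noteq> 0"
    proof
      assume "poly R zk = 0"
      then have "Lf (R * R) = 0" using Q[OF dRR] sumR[of "\<lambda>y. y * y"] by simp
      with Lf_sq_pos[OF R0] show False by simp
    qed
    have dHe: "poly (pderiv (He n)) zk = poly R zk"
      unfolding R by (simp add: pderiv_mult pderiv_pCons pderiv_diff pderiv_smult algebra_simps)
    have d1: "deriv (phi \<sigma>) xk = dphi \<sigma> xk" by (rule DERIV_imp_deriv[OF phi_deriv[OF xk0]])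
    have "((\<lambda>x. poly (He n) (phi \<sigma> x)) has_real_derivative poly (pderiv (He n)) (phi \<sigma> xk) * dphi \<sigma> xk) (at xk)"
      by (rule DERIV_chain2[OF poly_DERIV phi_deriv[OF xk0]])
    then have d2: "deriv (G \<sigma> n) xk = poly R zk * dphi \<sigma> xk"
      unfolding G_def[abs_def] pxk dHe by (rule DERIV_imp_deriv)
    have dp: "dphi \<sigma> xk \<noteq> 0" using dphi_pos[OF s xk0] by simp
    have int: "((\<lambda>x. G \<sigma> n x / (phi \<sigma> x - phi \<sigma> xk) * wt \<sigma> x) has_integral Lf R) {0<..}"
    proof (rule has_integral_spike[OF negligible_sing[of xk] _ transfer[OF s, of R]])
      fix x assume x: "x \<in> {0<..} - {xk}"
      have "phi \<sigma> x \<noteq> zk"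
      proof
        assume "phi \<sigma> x = zk"
        then have "x = xk" using phi_inv_phi[OF s, of x] x unfolding xk_def by auto
        with x show False by simp
      qed
      then show "G \<sigma> n x / (phi \<sigma> x - phi \<sigma> xk) * wt \<sigma> x = poly R (phi \<sigma> x) * wt \<sigma> x"
      proof -
        have "phi \<sigma> x - zk \<noteq> 0" using \<open>phi \<sigma> x \<noteq> zk\<close> by simp
        then show ?thesis unfolding G_def R pxk by (simp add: field_simps)
      qed
    qed
    show "\<exists>I. ((\<lambda>x. G \<sigma> n x / (phi \<sigma> x - phi \<sigma> (phi_inv \<sigma> (z k))) * wt \<sigma> x)
                              has_integral I) {0<..}
           \<and> h k = deriv (phi \<sigma>) (phi_inv \<sigma> (z k)) / deriv (G \<sigma> n) (phi_inv \<sigma> (z k)) * I"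
    proof (intro exI conjI)
      show "((\<lambda>x. G \<sigma> n x / (phi \<sigma> x - phi \<sigma> (phi_inv \<sigma> (z k))) * wt \<sigma> x) has_integral Lf R) {0<..}"
        using int unfolding xk_def zk_def .
      have "h k = Lf R / poly R zk" using LR Rk by simp
      also have "... = dphi \<sigma> xk / (poly R zk * dphi \<sigma> xk) * Lf R" using dp Rk by simp
      finally show "h k = deriv (phi \<sigma>) (phi_inv \<sigma> (z k)) / deriv (G \<sigma> n) (phi_inv \<sigma> (z k)) * Lf R"
        unfolding d1 d2 xk_def[symmetric] zk_def[symmetric] .
    qed
  qed
  show "\<forall>g :: real \<Rightarrow> real. (\<exists>q :: real poly. degree q \<le> 2 * n - 1
              \<and> (\<forall>t. g (phi_inv \<sigma> t) = poly q t))
         \<longrightarrow> ((\<lambda>x. g x * wt \<sigma> x) has_integral (\<Sum>k = 1..n. h k * g (phi_inv \<sigma> (z k)))) {0<..}"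
  proof (intro allI impI)
    fix g :: "real \<Rightarrow> real"
    assume "\<exists>q :: real poly. degree q \<le> 2 * n - 1 \<and> (\<forall>t. g (phi_inv \<sigma> t) = poly q t)"
    then obtain q where q: "degree q \<le> 2 * n - 1" "\<And>t. g (phi_inv \<sigma> t) = poly q t" by blast
    have "((\<lambda>x. poly q (phi \<sigma> x) * wt \<sigma> x) has_integral Lf q) {0<..}" by (rule transfer[OF s])
    moreover have "g x * wt \<sigma> x = poly q (phi \<sigma> x) * wt \<sigma> x" if "x \<in> {0<..}" for x
      using q(2)[of "phi \<sigma> x"] phi_inv_phi[OF s, of x] that by simp
    moreover have "Lf q = (\<Sum>k = 1..n. h k * g (phi_inv \<sigma> (z k)))"
      using Q[OF q(1)] q(2) by simp
    ultimately show "((\<lambda>x. g x * wt \<sigma> x) has_integral (\<Sum>k = 1..n. h k * g (phi_inv \<sigma> (z k)))) {0<..}"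
      using has_integral_cong by (metis (no_types, lifting))
  qed
qed


end
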